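(* For each $n\in\{1,2,3,\dots\}\cup\{\infty\}$ there exists a locally finite group $G^n$ with a proper left invariant metric $d_n$ such that $\operatorname{asdim}_{AN}(G^n,d_n)=n$.
   Context: A group is locally finite if every finitely generated subgroup is finite. A metric $d$ on a group is proper left invariant if $d(gh,gk)=d(h,k)$ for all $g,h,k$ and every ball is finite. $\operatorname{asdim}_{AN}(X)$ is the least $n$ for which there are constants $C>0$, $k\in\mathbb{R}$ such that for every $s>0$ there is a cover $\{\mathcal U_0,\dots,\mathcal U_n\}$ of $X$ whose members have $s$-scale connected components (classes of "joined by a finite chain inside the set with consecutive distances $<s$") of diameter at most $Cs+k$; it is $\infty$ if no such $n$ exists. *)

theory Defs
  imports "HOL-Algebra.Algebra" "HOL-Library.Extended_Nat"
begin

definition locally_finite_group :: "('a, 'b) monoid_scheme \<Rightarrow> bool" where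
  "locally_finite_group G \<longleftrightarrow> group G \<and>
     (\<forall>S. S \<subseteq> carrier G \<and> finite S \<longrightarrow> finite (generate G S))"

definition metric_on :: "'a set \<Rightarrow> ('a \<Rightarrow> 'a \<Rightarrow> real) \<Rightarrow> bool" where
  "metric_on A d \<longleftrightarrow>
     (\<forall>x\<in>A. \<forall>y\<in>A. 0 \<le> d x y \<and> (d x y = 0 \<longleftrightarrow> x = y) \<and> d x y = d y x) \<and>
     (\<forall>x\<in>A. \<forall>y\<in>A. \<forall>z\<in>A. d x z \<le> d x y + d y z)"

definition proper_left_invariant_metric ::
  "('a, 'b) monoid_scheme \<Rightarrow> ('a \<Rightarrow> 'a \<Rightarrow> real) \<Rightarrow> bool" where
  "proper_left_invariant_metric G d \<longleftrightarrow>
     metric_on (carrier G) d \<and>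
     (\<forall>g\<in>carrier G. \<forall>h\<in>carrier G. \<forall>k\<in>carrier G.
        d (g \<otimes>\<^bsub>G\<^esub> h) (g \<otimes>\<^bsub>G\<^esub> k) = d h k) \<and>
     (\<forall>x\<in>carrier G. \<forall>r::real. finite {y\<in>carrier G. d x y \<le> r})"

definition scale_connected :: "('a \<Rightarrow> 'a \<Rightarrow> real) \<Rightarrow> real \<Rightarrow> 'a set \<Rightarrow> 'a \<Rightarrow> 'a \<Rightarrow> bool" where
  "scale_connected d s U x y \<longleftrightarrow> x \<in> U \<and>
     (\<lambda>a b. a \<in> U \<and> b \<in> U \<and> d a b < s)\<^sup>*\<^sup>* x y"

definition asdim_AN_le :: "'a set \<Rightarrow> ('a \<Rightarrow> 'a \<Rightarrow> real) \<Rightarrow> nat \<Rightarrow> bool" where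
  "asdim_AN_le S d n \<longleftrightarrow>
     (\<exists>C::real. C > 0 \<and> (\<exists>k::real. \<forall>s::real. s > 0 \<longrightarrow>
        (\<exists>U :: nat \<Rightarrow> 'a set. (\<Union>i\<le>n. U i) = S \<and>
           (\<forall>i\<le>n. \<forall>x y. scale_connected d s (U i) x y \<longrightarrow> d x y \<le> C * s + k))))"

definition asdim_AN :: "'a set \<Rightarrow> ('a \<Rightarrow> 'a \<Rightarrow> real) \<Rightarrow> enat" where
  "asdim_AN S d = (if \<exists>n. asdim_AN_le S d n then enat (LEAST n. asdim_AN_le S d n) else \<infinity>)"

end

theory Submission
  imports Defs "HOL-Analysis.Brouwer_Fixpoint" "HOL-Library.Countable_Set"
begin

definition cyc :: "int \<Rightarrow> int \<Rightarrow> int \<Rightarrow> int" where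
  "cyc M a b = min ((a - b) mod M) ((b - a) mod M)"

lemma cyc_le_iff:
  assumes M: "M > 0"
  shows "cyc M a b \<le> t \<longleftrightarrow> (\<exists>e. \<bar>e\<bar> \<le> t \<and> M dvd (a - b - e))"
proof
  assume c: "cyc M a b \<le> t"
  show "\<exists>e. \<bar>e\<bar> \<le> t \<and> M dvd (a - b - e)"
  proof (cases "(a - b) mod M \<le> (b - a) mod M")
    case True
    then have 1: "(a - b) mod M \<le> t" using c by (simp add: cyc_def)
    have 2: "M dvd (a - b - (a - b) mod M)" by (rule dvd_minus_mod)
    have 3: "\<bar>(a - b) mod M\<bar> = (a - b) mod M" using M by simp
    show ?thesis by (rule exI[of _ "(a - b) mod M"]) (use 1 2 3 in simp)
  next
    case False
    then have 1: "(b - a) mod M \<le> t" using c by (simp add: cyc_def)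
    have "M dvd ((b - a) - (b - a) mod M)" by (rule dvd_minus_mod)
    then have "M dvd - ((b - a) - (b - a) mod M)" by (simp only: dvd_minus_iff)
    moreover have "- ((b - a) - (b - a) mod M) = a - b - (- ((b - a) mod M))" by simp
    ultimately have 2: "M dvd (a - b - (- ((b - a) mod M)))" by (simp only:)
    have 3: "\<bar>- ((b - a) mod M)\<bar> = (b - a) mod M" using M by simp
    show ?thesis by (rule exI[of _ "- ((b - a) mod M)"]) (use 1 2 3 in simp)
  qed
next
  assume "\<exists>e. \<bar>e\<bar> \<le> t \<and> M dvd (a - b - e)"
  then obtain e where e: "\<bar>e\<bar> \<le> t" "M dvd (a - b - e)" by blast
  show "cyc M a b \<le> t"
  proof (cases "e \<ge> 0")
    case True
    have "(a - b) mod M = e mod M" using e(2) by (simp only: mod_eq_dvd_iff)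
    also have "\<dots> \<le> e" using True M by (simp add: zmod_le_nonneg_dividend)
    finally show ?thesis using e(1) by (simp add: cyc_def)
  next
    case False
    have "M dvd - (a - b - e)" using e(2) by (simp only: dvd_minus_iff)
    moreover have "- (a - b - e) = (b - a) - (- e)" by simp
    ultimately have "M dvd (b - a) - (- e)" by (simp only:)
    then have "(b - a) mod M = (- e) mod M" by (simp only: mod_eq_dvd_iff)
    also have "\<dots> \<le> - e" using False M by (simp add: zmod_le_nonneg_dividend)
    finally show ?thesis using e(1) False by (simp add: cyc_def)
  qed
qed

lemma cyc_nonneg: "M > 0 \<Longrightarrow> 0 \<le> cyc M a b"
  by (simp add: cyc_def)

lemma cyc_less: "M > 0 \<Longrightarrow> cyc M a b < M"
  by (simp add: cyc_def min_less_iff_disj)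

lemma cyc_sym: "cyc M a b = cyc M b a"
  by (simp add: cyc_def min.commute)

lemma cyc_self: "cyc M a a = 0"
  by (simp add: cyc_def)

lemma cyc_triangle:
  assumes M: "M > 0"
  shows "cyc M a c \<le> cyc M a b + cyc M b c"
proof -
  obtain e1 where e1: "\<bar>e1\<bar> \<le> cyc M a b" "M dvd (a - b - e1)" using cyc_le_iff[OF M] by blast
  obtain e2 where e2: "\<bar>e2\<bar> \<le> cyc M b c" "M dvd (b - c - e2)" using cyc_le_iff[OF M] by blast
  have "M dvd (a - c - (e1 + e2))" using dvd_add[OF e1(2) e2(2)] by (simp add: algebra_simps)
  moreover have "\<bar>e1 + e2\<bar> \<le> cyc M a b + cyc M b c" using e1(1) e2(1) by linarith
  ultimately show ?thesis using cyc_le_iff[OF M] by blast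
qed

lemma cyc_zero_iff:
  assumes M: "M > 0" and a: "0 \<le> a" "a < M" and b: "0 \<le> b" "b < M"
  shows "cyc M a b = 0 \<longleftrightarrow> a = b"
proof
  assume "cyc M a b = 0"
  then have "cyc M a b \<le> 0" by simp
  then obtain e where "\<bar>e\<bar> \<le> 0" "M dvd (a - b - e)" using cyc_le_iff[OF M] by blast
  then have "M dvd (a - b)" by simp
  then obtain q where q: "a - b = M * q" by (auto elim: dvdE)
  have "q = 0"
  proof (rule ccontr)
    assume "q \<noteq> 0"
    then have "\<bar>M * q\<bar> \<ge> M" using M by (simp add: abs_mult mult_le_cancel_left1)
    then show False using q a b by linarith
  qed
  then show "a = b" using q by simp
qed (simp add: cyc_self)

lemma cyc_shift: "cyc M ((g + a) mod M) ((g + b) mod M) = cyc M a b"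
proof -
  have e1: "((g + a) mod M - (g + b) mod M) mod M = (a - b) mod M"
  proof -
    have "((g + a) mod M - (g + b) mod M) mod M = ((g + a) - (g + b)) mod M"
      by (rule mod_diff_eq)
    also have "(g + a) - (g + b) = a - b" by simp
    finally show ?thesis .
  qed
  have e2: "((g + b) mod M - (g + a) mod M) mod M = (b - a) mod M"
  proof -
    have "((g + b) mod M - (g + a) mod M) mod M = ((g + b) - (g + a)) mod M"
      by (rule mod_diff_eq)
    also have "(g + b) - (g + a) = b - a" by simp
    finally show ?thesis .
  qed
  show ?thesis unfolding cyc_def e1 e2 ..
qed

lemma cyc_ge:
  assumes M: "M > 0" and q: "0 \<le> q" "2 * q \<le> M"
  shows "cyc M 0 q \<ge> q"
proof (rule ccontr)
  assume "\<not> cyc M 0 q \<ge> q"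
  then have "cyc M 0 q \<le> q - 1" by simp
  then obtain e where e: "\<bar>e\<bar> \<le> q - 1" "M dvd (0 - q - e)" using cyc_le_iff[OF M] by blast
  then obtain r where r: "- q - e = M * r" by (auto elim: dvdE)
  have "r = 0"
  proof (rule ccontr)
    assume "r \<noteq> 0"
    then have "\<bar>M * r\<bar> \<ge> M" using M by (simp add: abs_mult mult_le_cancel_left1)
    then show False using r e q by linarith
  qed
  then have "e = - q" using r by simp
  then show False using e(1) q(1) by simp
qed

lemma bad_near:
  fixes u L r :: int
  assumes L: "L > 0" and nb: "\<not> (r \<le> u mod L \<and> u mod L \<le> L - r)"
  shows "\<exists>q. \<bar>u - q * L\<bar> < r"
proof -
  have u: "u = (u div L) * L + u mod L" by simp
  have b: "0 \<le> u mod L" "u mod L < L" using L by simp_all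
  show ?thesis
  proof (cases "u mod L < r")
    case True
    have "u - (u div L) * L = u mod L" by (rule minus_div_mult_eq_mod)
    then show ?thesis using b True by (intro exI[of _ "u div L"]) simp
  next
    case False
    then have "u mod L > L - r" using nb by simp
    have "u - (u div L + 1) * L = u mod L - L" using minus_div_mult_eq_mod[of u L] by (simp add: algebra_simps)
    then show ?thesis using b \<open>u mod L > L - r\<close> by (intro exI[of _ "u div L + 1"]) simp
  qed
qed

lemma bad_unique:
  fixes r v q q' :: int and i i' N :: nat
  assumes r: "r > 0" and i: "i \<le> N" and i': "i' \<le> N"
    and h1: "\<bar>v - int i * (2 * r) - q * (int (Suc N) * (2 * r))\<bar> < r"
    and h2: "\<bar>v - int i' * (2 * r) - q' * (int (Suc N) * (2 * r))\<bar> < r"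
  shows "i = i'"
proof -
  define z where "z = (int i' - int i) - (q - q') * int (Suc N)"
  have eq: "(v - int i * (2 * r) - q * (int (Suc N) * (2 * r))) - (v - int i' * (2 * r) - q' * (int (Suc N) * (2 * r)))
      = z * (2 * r)" by (simp add: z_def algebra_simps)
  have "\<bar>z * (2 * r)\<bar> < 2 * r" using h1 h2 eq by linarith
  then have "\<bar>z\<bar> * (2 * r) < 1 * (2 * r)" using r by (simp add: abs_mult)
  then have "\<bar>z\<bar> < 1" using r by (meson mult_less_cancel_right_pos zero_less_mult_iff zero_less_numeral)
  then have z0: "z = 0" by simp
  then have d: "int i' - int i = (q - q') * int (Suc N)" by (simp add: z_def)
  show ?thesis
  proof (cases "q = q'")
    case True then show ?thesis using d by simp
  next
    case False
    then have "\<bar>q - q'\<bar> \<ge> 1" by simp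
    then have "\<bar>q - q'\<bar> * int (Suc N) \<ge> 1 * int (Suc N)" by (intro mult_right_mono) auto
    then have "\<bar>int i' - int i\<bar> \<ge> int (Suc N)" using d by (simp add: abs_mult)
    then show ?thesis using i i' by linarith
  qed
qed

definition wpos :: "int \<Rightarrow> int \<Rightarrow> int \<Rightarrow> int \<Rightarrow> int" where
  "wpos M L c v = (v - (v - c) mod L) mod M"

lemma wpos_step:
  fixes M L c r a b :: int
  assumes M: "M > 0" and L: "L > 0" and LM: "L dvd M"
    and ga: "r \<le> (a - c) mod L \<and> (a - c) mod L \<le> L - r"
    and cy: "cyc M b a < r"
  shows "wpos M L c a = wpos M L c b"
proof -
  have "cyc M b a \<le> r - 1" using cy by simp
  then obtain e where e: "\<bar>e\<bar> \<le> r - 1" "M dvd (b - a - e)" using cyc_le_iff[OF M] by blast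
  obtain k where k: "b - a - e = M * k" using e(2) by (auto elim: dvdE)
  obtain l where l: "M = L * l" using LM by (auto elim: dvdE)
  have bb: "b - c = (a - c + e) + L * (l * k)" using k l by (simp add: algebra_simps)
  have "(b - c) mod L = (a - c + e) mod L" unfolding bb by (rule mod_mult_self2)
  also have "(a - c + e) mod L = (a - c) mod L + e"
  proof -
    have "a - c + e = ((a - c) div L) * L + ((a - c) mod L + e)" by simp
    moreover have "0 \<le> (a - c) mod L + e" "(a - c) mod L + e < L" using ga e(1) by linarith+
    ultimately show ?thesis by (metis mod_pos_pos_trivial mod_mult_self3 add.commute)
  qed
  finally have rb: "(b - c) mod L = (a - c) mod L + e" .
  have "b - (b - c) mod L = (a - (a - c) mod L) + M * k" using rb k by (simp add: algebra_simps)
  then show ?thesis unfolding wpos_def by simp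
qed

lemma wpos_end:
  fixes M L c a b :: int
  assumes M: "M > 0" and L: "L > 0" and w: "wpos M L c a = wpos M L c b"
  shows "cyc M a b \<le> L"
proof -
  have "M dvd ((a - (a - c) mod L) - (b - (b - c) mod L))"
    using w unfolding wpos_def by (simp add: mod_eq_dvd_iff)
  then have "M dvd (a - b - ((a - c) mod L - (b - c) mod L))" by (simp add: algebra_simps)
  moreover have "\<bar>(a - c) mod L - (b - c) mod L\<bar> \<le> L"
    using L pos_mod_bound[OF L, of "a - c"] pos_mod_bound[OF L, of "b - c"]
      pos_mod_sign[OF L, of "a - c"] pos_mod_sign[OF L, of "b - c"] by linarith
  ultimately show ?thesis using cyc_le_iff[OF M] by blast
qed

lemma pow2_between:
  fixes t :: real
  assumes t: "t > 1"
  shows "\<exists>a::nat. 0 < a \<and> t \<le> 2 ^ a \<and> 2 ^ a < 2 * t"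
proof -
  obtain n :: nat where n: "t < 2 ^ n" using real_arch_pow[of 2 t] by auto
  define a where "a = (LEAST a::nat. t \<le> 2 ^ a)"
  have ta: "t \<le> 2 ^ a" unfolding a_def by (rule LeastI[of _ n]) (use n in simp)
  have a0: "a \<noteq> 0"
  proof
    assume "a = 0" then show False using ta t by simp
  qed
  have "\<not> t \<le> 2 ^ (a - 1)" unfolding a_def by (rule not_less_Least) (use a0 a_def in simp)
  then have "2 ^ (a - 1) < t" by simp
  moreover have "(2::real) ^ a = 2 * 2 ^ (a - 1)" using a0 by (metis power_eq_if)
  ultimately show ?thesis using ta a0 by (intro exI[of _ a]) auto
qed

definition gadj :: "(nat\<Rightarrow>nat) \<Rightarrow> (nat\<Rightarrow>nat) \<Rightarrow> bool" where
  "gadj a b \<longleftrightarrow> (\<forall>i. a i \<le> Suc (b i) \<and> b i \<le> Suc (a i))"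

lemma hex:
  fixes col :: "(nat\<Rightarrow>nat) \<Rightarrow> nat" and p N :: nat
  assumes p: "0 < p" and col: "\<And>x. (\<forall>i. x i \<le> p) \<Longrightarrow> col x < N"
  shows "\<exists>j<N. \<exists>x y. (\<forall>i. x i \<le> p) \<and> (\<forall>i. y i \<le> p) \<and> col x = j \<and> x j = 0 \<and> p \<le> Suc (y j) \<and>
     (\<lambda>a b. (\<forall>i. a i \<le> p) \<and> (\<forall>i. b i \<le> p) \<and> col a = j \<and> col b = j \<and> gadj a b)\<^sup>*\<^sup>* y x"
proof (rule ccontr)
  assume H: "\<not> ?thesis"
  define R where "R j a b \<longleftrightarrow> gadj a b \<and> (\<forall>i. b i \<le> p) \<and> col b = j" for j a b
  define Q where "Q j a b \<longleftrightarrow> (\<forall>i. a i \<le> p) \<and> (\<forall>i. b i \<le> p) \<and> col a = j \<and> col b = j \<and> gadj a b" for j a b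
  define B where "B j x \<longleftrightarrow> (\<exists>y. (\<forall>i. y i \<le> p) \<and> y j = p \<and> (R j)\<^sup>*\<^sup>* y x)" for j x
  have chainQ: "(R j)\<^sup>*\<^sup>* w x \<Longrightarrow> (\<forall>i. w i \<le> p) \<Longrightarrow> col w = j \<Longrightarrow>
      (Q j)\<^sup>*\<^sup>* w x \<and> col x = j \<and> (\<forall>i. x i \<le> p)" for j w x
  proof (induction rule: rtranclp_induct)
    case base then show ?case by auto
  next
    case (step b c)
    then show ?case by (auto simp: R_def Q_def intro: rtranclp.rtrancl_into_rtrancl)
  qed
  have noB0: "\<not> (B j x \<and> x j = 0)" if "j < N" for j x
  proof
    assume a: "B j x \<and> x j = 0"
    then obtain y where y: "\<forall>i. y i \<le> p" "y j = p" "(R j)\<^sup>*\<^sup>* y x" unfolding B_def by blast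
    from y(3) show False
    proof (cases rule: converse_rtranclpE)
      case base then show False using a y p by simp
    next
      case (step w)
      then have w: "gadj y w" "\<forall>i. w i \<le> p" "col w = j" by (auto simp: R_def)
      have "p \<le> Suc (w j)" using w(1) y(2) unfolding gadj_def by metis
      moreover have "(Q j)\<^sup>*\<^sup>* w x \<and> col x = j \<and> (\<forall>i. x i \<le> p)"
        using chainQ[OF step(2) w(2) w(3)] .
      ultimately show False using H that a w unfolding Q_def by blast
    qed
  qed
  define lab where "lab x j = (if B j x then 1 else 0::nat)" for x j
  have "odd (card {s. ksimplex p N s \<and> (reduced N \<circ> lab) ` s = {..N}})"
  proof (rule kuhn_combinatorial[OF p])
    show "\<forall>x j. (\<forall>j. x j \<le> p) \<and> j < N \<and> x j = 0 \<longrightarrow> lab x j = 0"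
      using noB0 by (auto simp: lab_def)
    show "\<forall>x j. (\<forall>j. x j \<le> p) \<and> j < N \<and> x j = p \<longrightarrow> lab x j = 1"
      by (auto simp: lab_def B_def)
  qed
  then have "{s. ksimplex p N s \<and> (reduced N \<circ> lab) ` s = {..N}} \<noteq> {}"
    by (metis card.empty odd_pos less_irrefl)
  then obtain s where s: "ksimplex p N s" "(reduced N \<circ> lab) ` s = {..N}" by blast
  from s(1) obtain base upd where ks: "kuhn_simplex p N base upd s" by (auto elim: ksimplex.cases)
  have adj: "gadj a b" if "a \<in> s" "b \<in> s" for a b
    using kuhn_simplex.base_le[OF ks that(1)] kuhn_simplex.le_Suc_base[OF ks that(1)]
      kuhn_simplex.base_le[OF ks that(2)] kuhn_simplex.le_Suc_base[OF ks that(2)]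
    unfolding gadj_def by (metis le_Suc_eq le_trans Suc_le_mono)
  have gr: "\<forall>i. a i \<le> p" if "a \<in> s" for a
    using kuhn_simplex.s_le_p[OF ks that] by blast
  have "N \<in> (reduced N \<circ> lab) ` s" using s(2) by auto
  then obtain z where z: "z \<in> s" "reduced N (lab z) = N" by auto
  define c where "c = col z"
  have cN: "c < N" using col gr z(1) c_def by blast
  have "lab z c = 0" using reduced_labelling(2)[of N "lab z"] z(2) cN by auto
  then have nB: "\<not> B c z" by (auto simp: lab_def)
  have "c \<in> (reduced N \<circ> lab) ` s" using s(2) cN by auto
  then obtain w where w: "w \<in> s" "reduced N (lab w) = c" by auto
  have "lab w c \<noteq> 0" using reduced_labelling(3)[of N "lab w"] w(2) cN by auto
  then have "B c w" by (auto simp: lab_def split: if_splits)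
  then obtain y where y: "\<forall>i. y i \<le> p" "y c = p" "(R c)\<^sup>*\<^sup>* y w" unfolding B_def by blast
  have "R c w z" using adj[OF w(1) z(1)] gr[OF z(1)] c_def by (auto simp: R_def)
  then have "(R c)\<^sup>*\<^sup>* y z" using y(3) by (rule rtranclp.rtrancl_into_rtrancl[rotated])
  then have "B c z" using y unfolding B_def by blast
  then show False using nB by blast
qed

lemma asdim_pullback:
  assumes h: "\<And>x. x \<in> XS \<Longrightarrow> h x \<in> YS"
    and iso: "\<And>x y. x \<in> XS \<Longrightarrow> y \<in> XS \<Longrightarrow> dX x y = dY (h x) (h y)"
    and le: "asdim_AN_le YS dY n"
  shows "asdim_AN_le XS dX n"
proof -
  from le obtain C k where C: "C > 0" and H: "\<And>s. s > 0 \<Longrightarrow> \<exists>U :: nat \<Rightarrow> _ set. (\<Union>i\<le>n. U i) = YS \<and>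
           (\<forall>i\<le>n. \<forall>x y. scale_connected dY s (U i) x y \<longrightarrow> dY x y \<le> C * s + k)"
    unfolding asdim_AN_le_def by blast
  have "\<forall>s::real. s > 0 \<longrightarrow> (\<exists>U :: nat \<Rightarrow> _ set. (\<Union>i\<le>n. U i) = XS \<and>
           (\<forall>i\<le>n. \<forall>x y. scale_connected dX s (U i) x y \<longrightarrow> dX x y \<le> C * s + k))"
  proof (intro allI impI)
    fix s :: real assume s: "s > 0"
    from H[OF s] obtain U where U: "(\<Union>i\<le>n. U i) = YS"
      "\<And>i x y. i \<le> n \<Longrightarrow> scale_connected dY s (U i) x y \<Longrightarrow> dY x y \<le> C * s + k" by blast
    define U' where "U' i = {x\<in>XS. h x \<in> U i}" for i
    show "\<exists>U :: nat \<Rightarrow> _ set. (\<Union>i\<le>n. U i) = XS \<and>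
           (\<forall>i\<le>n. \<forall>x y. scale_connected dX s (U i) x y \<longrightarrow> dX x y \<le> C * s + k)"
    proof (intro exI conjI allI impI)
      show "(\<Union>i\<le>n. U' i) = XS"
      proof
        show "(\<Union>i\<le>n. U' i) \<subseteq> XS" by (auto simp: U'_def)
        show "XS \<subseteq> (\<Union>i\<le>n. U' i)"
        proof
          fix x assume "x \<in> XS"
          then have "h x \<in> (\<Union>i\<le>n. U i)" using h U(1) by blast
          then show "x \<in> (\<Union>i\<le>n. U' i)" using \<open>x \<in> XS\<close> by (auto simp: U'_def)
        qed
      qed
      fix i x y assume i: "i \<le> n" and sc: "scale_connected dX s (U' i) x y"
      have x: "x \<in> U' i" and r: "(\<lambda>a b. a \<in> U' i \<and> b \<in> U' i \<and> dX a b < s)\<^sup>*\<^sup>* x y"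
        using sc unfolding scale_connected_def by auto
      have "(\<lambda>a b. a \<in> U i \<and> b \<in> U i \<and> dY a b < s)\<^sup>*\<^sup>* (h x) (h y) \<and> y \<in> U' i"
        using r
      proof (induction rule: rtranclp_induct)
        case base then show ?case using x by simp
      next
        case (step b c)
        then have "b \<in> XS" "c \<in> XS" "h b \<in> U i" "h c \<in> U i" "dY (h b) (h c) < s"
          using iso by (auto simp: U'_def)
        then show ?case using step by (auto intro: rtranclp.rtrancl_into_rtrancl)
      qed
      then have "scale_connected dY s (U i) (h x) (h y)" "y \<in> XS"
        using x unfolding scale_connected_def U'_def by auto
      then show "dX x y \<le> C * s + k" using U(2)[OF i] iso x unfolding U'_def by auto
    qed
  qed
  then show ?thesis using C unfolding asdim_AN_le_def by blast
qed

lemma asdim_eqI: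
  assumes "\<And>n. asdim_AN_le XS dX n \<longleftrightarrow> asdim_AN_le YS dY n"
  shows "asdim_AN XS dX = asdim_AN YS dY"
proof -
  have "asdim_AN_le XS dX = asdim_AN_le YS dY" using assms by blast
  then show ?thesis unfolding asdim_AN_def by simp
qed

lemma transport:
  fixes G :: "('a, 'b) monoid_scheme"
  assumes lf: "locally_finite_group G" and pm: "proper_left_invariant_metric G d"
    and cnt: "countable (carrier G)"
  shows "\<exists>(G'::nat monoid) d'. locally_finite_group G' \<and> proper_left_invariant_metric G' d' \<and>
          asdim_AN (carrier G') d' = asdim_AN (carrier G) d"
proof -
  let ?A = "carrier G"
  define f where "f = to_nat_on ?A"
  define g where "g = from_nat_into ?A"
  have gf: "g (f a) = a" if "a \<in> ?A" for a using cnt that by (simp add: f_def g_def)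
  have fg: "f (g x) = x" if "x \<in> f ` ?A" for x using that by (simp add: f_def g_def)
  have gA: "g x \<in> ?A" if "x \<in> f ` ?A" for x using that gf by auto
  interpret G: group G using lf by (simp add: locally_finite_group_def)
  define G' where "G' = \<lparr>carrier = f ` ?A, monoid.mult = (\<lambda>x y. f (g x \<otimes>\<^bsub>G\<^esub> g y)), one = f \<one>\<^bsub>G\<^esub>\<rparr>"
  define d' where "d' x y = d (g x) (g y)" for x y
  have cG': "carrier G' = f ` ?A" by (simp add: G'_def)
  have mG': "x \<otimes>\<^bsub>G'\<^esub> y = f (g x \<otimes>\<^bsub>G\<^esub> g y)" for x y by (simp add: G'_def)
  have oG': "\<one>\<^bsub>G'\<^esub> = f \<one>\<^bsub>G\<^esub>" by (simp add: G'_def)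
  have grp: "group G'"
  proof (rule groupI)
    show "x \<otimes>\<^bsub>G'\<^esub> y \<in> carrier G'" if "x \<in> carrier G'" "y \<in> carrier G'" for x y
      using that gA by (simp add: cG' mG')
    show "\<one>\<^bsub>G'\<^esub> \<in> carrier G'" by (simp add: cG' oG')
    show "x \<otimes>\<^bsub>G'\<^esub> y \<otimes>\<^bsub>G'\<^esub> z = x \<otimes>\<^bsub>G'\<^esub> (y \<otimes>\<^bsub>G'\<^esub> z)"
      if "x \<in> carrier G'" "y \<in> carrier G'" "z \<in> carrier G'" for x y z
      using that gA by (simp add: cG' mG' gf G.m_assoc)
    show "\<one>\<^bsub>G'\<^esub> \<otimes>\<^bsub>G'\<^esub> x = x" if "x \<in> carrier G'" for x
      using that gA by (simp add: cG' mG' oG' gf fg)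
    show "\<exists>y\<in>carrier G'. y \<otimes>\<^bsub>G'\<^esub> x = \<one>\<^bsub>G'\<^esub>" if "x \<in> carrier G'" for x
    proof
      show "f (inv\<^bsub>G\<^esub> (g x)) \<in> carrier G'" using that gA by (simp add: cG')
      show "f (inv\<^bsub>G\<^esub> (g x)) \<otimes>\<^bsub>G'\<^esub> x = \<one>\<^bsub>G'\<^esub>" using that gA by (simp add: cG' mG' oG' gf)
    qed
  qed
  have hom: "group_hom G G' f"
  proof (rule group_hom.intro[OF G.is_group grp])
    show "group_hom_axioms G G' f"
      unfolding group_hom_axioms_def hom_def using gf by (auto simp: cG' mG')
  qed
  have lf': "locally_finite_group G'"
    unfolding locally_finite_group_def
  proof (intro conjI grp allI impI)
    fix S assume S: "S \<subseteq> carrier G' \<and> finite S"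
    have S': "S = f ` (g ` S)" using S fg by (force simp: cG' image_image)
    have gS: "g ` S \<subseteq> ?A" using S gA by (auto simp: cG')
    have "finite (generate G (g ` S))" using lf gS S unfolding locally_finite_group_def by blast
    then show "finite (generate G' S)"
      using group_hom.generate_img[OF hom gS] S' by simp
  qed
  have met: "metric_on ?A d" and li: "\<forall>a\<in>?A. \<forall>b\<in>?A. \<forall>c\<in>?A. d (a \<otimes>\<^bsub>G\<^esub> b) (a \<otimes>\<^bsub>G\<^esub> c) = d b c"
    and pr: "\<forall>x\<in>?A. \<forall>r::real. finite {y\<in>?A. d x y \<le> r}"
    using pm unfolding proper_left_invariant_metric_def by auto
  have ginj: "g x = g y \<Longrightarrow> x \<in> f ` ?A \<Longrightarrow> y \<in> f ` ?A \<Longrightarrow> x = y" for x y by (metis fg)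
  have pm': "proper_left_invariant_metric G' d'"
    unfolding proper_left_invariant_metric_def
  proof (intro conjI ballI allI)
    show "metric_on (carrier G') d'"
      using met gA ginj unfolding metric_on_def d'_def cG' by metis
    show "d' (x \<otimes>\<^bsub>G'\<^esub> y) (x \<otimes>\<^bsub>G'\<^esub> z) = d' y z" if "x \<in> carrier G'" "y \<in> carrier G'" "z \<in> carrier G'" for x y z
      using that gA li by (simp add: cG' mG' d'_def gf)
    fix x r assume x: "x \<in> carrier G'"
    have "{y \<in> carrier G'. d' x y \<le> r} = f ` {a\<in>?A. d (g x) a \<le> r}"
      using gA gf by (auto simp: cG' d'_def)
    then show "finite {y \<in> carrier G'. d' x y \<le> r}" using pr x gA by (simp add: cG')
  qed
  have "asdim_AN (carrier G') d' = asdim_AN ?A d"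
  proof (rule asdim_eqI, rule iffI)
    fix n assume "asdim_AN_le (carrier G') d' n"
    then show "asdim_AN_le ?A d n"
      by (rule asdim_pullback[where h = f, rotated 2]) (auto simp: cG' d'_def gf)
  next
    fix n assume "asdim_AN_le ?A d n"
    then show "asdim_AN_le (carrier G') d' n"
      by (rule asdim_pullback[where h = g, rotated 2]) (auto simp: cG' d'_def gA)
  qed
  then show ?thesis using lf' pm' by blast
qed

definition lam :: "(nat \<Rightarrow> int) \<Rightarrow> nat \<Rightarrow> int" where
  "lam m j = (\<Prod>i<j. m i)"

definition DE :: "(nat \<Rightarrow> nat) \<Rightarrow> (nat \<Rightarrow> int) \<Rightarrow> (nat \<Rightarrow> nat \<Rightarrow> int) set" where
  "DE D m = {x. (\<forall>j i. 0 \<le> x j i \<and> x j i < m j) \<and> (\<forall>j i. D j \<le> i \<longrightarrow> x j i = 0) \<and>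
      (\<exists>N. \<forall>j\<ge>N. \<forall>i. x j i = 0)}"

definition DEN :: "(nat \<Rightarrow> nat) \<Rightarrow> (nat \<Rightarrow> int) \<Rightarrow> nat \<Rightarrow> (nat \<Rightarrow> nat \<Rightarrow> int) set" where
  "DEN D m N = {x\<in>DE D m. \<forall>j\<ge>N. \<forall>i. x j i = 0}"

definition DG :: "(nat \<Rightarrow> nat) \<Rightarrow> (nat \<Rightarrow> int) \<Rightarrow> (nat \<Rightarrow> nat \<Rightarrow> int) monoid" where
  "DG D m = \<lparr>carrier = DE D m, monoid.mult = (\<lambda>x y j i. (x j i + y j i) mod m j), one = (\<lambda>j i. 0)\<rparr>"

definition dvals :: "(nat \<Rightarrow> int) \<Rightarrow> (nat \<Rightarrow> nat \<Rightarrow> int) \<Rightarrow> (nat \<Rightarrow> nat \<Rightarrow> int) \<Rightarrow> int set" where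
  "dvals m x y = {lam m j * cyc (m j) (x j i) (y j i) | j i. cyc (m j) (x j i) (y j i) \<noteq> 0}"

definition dd :: "(nat \<Rightarrow> int) \<Rightarrow> (nat \<Rightarrow> nat \<Rightarrow> int) \<Rightarrow> (nat \<Rightarrow> nat \<Rightarrow> int) \<Rightarrow> real" where
  "dd m x y = real_of_int (Max (insert 0 (dvals m x y)))"

locale digits =
  fixes D :: "nat \<Rightarrow> nat" and m :: "nat \<Rightarrow> int"
  assumes m2: "\<And>j. m j \<ge> 2"
begin

lemma mpos: "m j > 0" using m2[of j] by simp

lemma lam_0[simp]: "lam m 0 = 1" by (simp add: lam_def)
lemma lam_Suc: "lam m (Suc j) = lam m j * m j" by (simp add: lam_def)

lemma lam_ge: "lam m j \<ge> 2 ^ j"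
proof (induction j)
  case 0 then show ?case by simp
next
  case (Suc j)
  have "(2::int) ^ Suc j = 2 ^ j * 2" by simp
  also have "\<dots> \<le> lam m j * m j"
  proof -
    have "0 \<le> lam m j" using Suc.IH by (meson order_trans zero_le_numeral zero_le_power)
    then show ?thesis using Suc m2[of j] by (intro mult_mono) auto
  qed
  finally show ?case by (simp add: lam_Suc)
qed

lemma lam_pos: "lam m j \<ge> 1"
  using lam_ge[of j] by (smt (verit) one_le_power)

lemma lam_mono: "j \<le> j' \<Longrightarrow> lam m j \<le> lam m j'"
proof (induction j' rule: dec_induct)
  case base then show ?case by simp
next
  case (step k)
  have "lam m k * 1 \<le> lam m k * m k" using lam_pos[of k] m2[of k] by (intro mult_left_mono) auto
  then show ?case using step by (simp add: lam_Suc)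
qed

lemma lam_unbounded: "\<exists>N. real_of_int (lam m N) > r"
proof -
  obtain N :: nat where "r < N" using reals_Archimedean2 by blast
  moreover have "int N < 2 ^ N" using less_exp[of N] by (metis of_nat_less_iff of_nat_numeral of_nat_power)
  then have "real N < real_of_int (lam m N)" using lam_ge[of N] by linarith
  ultimately show ?thesis by (intro exI[of _ N]) linarith
qed

lemma DE_bound: "x \<in> DE D m \<Longrightarrow> \<exists>N. \<forall>j\<ge>N. \<forall>i. x j i = 0"
  by (simp add: DE_def)

lemma DE_range: "x \<in> DE D m \<Longrightarrow> 0 \<le> x j i \<and> x j i < m j"
  by (simp add: DE_def)

lemma DE_D: "x \<in> DE D m \<Longrightarrow> D j \<le> i \<Longrightarrow> x j i = 0"
  by (simp add: DE_def)

lemma finite_DEN: "finite (DEN D m N)"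
proof -
  let ?I = "Sigma {..<N} (\<lambda>j. {..<D j})"
  let ?F = "PiE ?I (\<lambda>(j,i). {0..<m j})"
  let ?g = "\<lambda>f j i. if j < N \<and> i < D j then f (j, i) else 0"
  have "DEN D m N \<subseteq> ?g ` ?F"
  proof
    fix x assume x: "x \<in> DEN D m N"
    have "x = ?g (restrict (\<lambda>(j,i). x j i) ?I)"
      using x by (auto simp: DEN_def DE_def fun_eq_iff not_less)
    moreover have "restrict (\<lambda>(j,i). x j i) ?I \<in> ?F"
      using x by (auto simp: DEN_def DE_def)
    ultimately show "x \<in> ?g ` ?F" by blast
  qed
  moreover have "finite ?F" by (intro finite_PiE) auto
  ultimately show ?thesis by (meson finite_imageI finite_subset)
qed

lemma countable_DE: "countable (DE D m)"
proof -
  let ?f = "\<lambda>xs::int list list. \<lambda>j i. if j < length xs \<and> i < length (xs ! j) then xs ! j ! i else 0"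
  have "DE D m \<subseteq> range ?f"
  proof
    fix x assume x: "x \<in> DE D m"
    then obtain N where N: "\<forall>j\<ge>N. \<forall>i. x j i = 0" by (auto simp: DE_def)
    have "x j i = ?f (map (\<lambda>j. map (x j) [0..<D j]) [0..<N]) j i" for j i
    proof (cases "j < N")
      case True
      then show ?thesis using x by (cases "i < D j") (auto simp: DE_def)
    next
      case False
      then show ?thesis using N by auto
    qed
    then have "x = ?f (map (\<lambda>j. map (x j) [0..<D j]) [0..<N])" by (intro ext)
    then show "x \<in> range ?f" by blast
  qed
  then show ?thesis by (rule countable_subset) simp
qed

lemma DG_carrier[simp]: "carrier (DG D m) = DE D m" by (simp add: DG_def)
lemma DG_mult[simp]: "x \<otimes>\<^bsub>DG D m\<^esub> y = (\<lambda>j i. (x j i + y j i) mod m j)" by (simp add: DG_def)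
lemma DG_one[simp]: "\<one>\<^bsub>DG D m\<^esub> = (\<lambda>j i. 0)" by (simp add: DG_def)

lemma mult_closed: "x \<in> DE D m \<Longrightarrow> y \<in> DE D m \<Longrightarrow> (\<lambda>j i. (x j i + y j i) mod m j) \<in> DE D m"
proof -
  assume x: "x \<in> DE D m" and y: "y \<in> DE D m"
  obtain N1 where N1: "\<forall>j\<ge>N1. \<forall>i. x j i = 0" using x by (auto simp: DE_def)
  obtain N2 where N2: "\<forall>j\<ge>N2. \<forall>i. y j i = 0" using y by (auto simp: DE_def)
  have "\<forall>j\<ge>max N1 N2. \<forall>i. (x j i + y j i) mod m j = 0" using N1 N2 by simp
  then have ex: "\<exists>N. \<forall>j\<ge>N. \<forall>i. (x j i + y j i) mod m j = 0" by blast
  show ?thesis unfolding DE_def mem_Collect_eq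
  proof (intro conjI allI impI ex)
    fix j i
    show "0 \<le> (x j i + y j i) mod m j" "(x j i + y j i) mod m j < m j" using mpos[of j] by simp_all
    assume "D j \<le> i"
    then show "(x j i + y j i) mod m j = 0" using DE_D[OF x] DE_D[OF y] by simp
  qed
qed

lemma neg_closed: "x \<in> DE D m \<Longrightarrow> (\<lambda>j i. (- x j i) mod m j) \<in> DE D m"
proof -
  assume x: "x \<in> DE D m"
  obtain N1 where N1: "\<forall>j\<ge>N1. \<forall>i. x j i = 0" using x by (auto simp: DE_def)
  then have ex: "\<exists>N. \<forall>j\<ge>N. \<forall>i. (- x j i) mod m j = 0" by (intro exI[of _ N1]) simp
  show ?thesis unfolding DE_def mem_Collect_eq
  proof (intro conjI allI impI ex)
    fix j i
    show "0 \<le> (- x j i) mod m j" "(- x j i) mod m j < m j" using mpos[of j] by simp_all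
    assume "D j \<le> i"
    then show "(- x j i) mod m j = 0" using DE_D[OF x] by simp
  qed
qed

lemma zero_in: "(\<lambda>j i. 0) \<in> DE D m"
  using mpos by (auto simp: DE_def)

lemma group_DG: "group (DG D m)"
proof (rule groupI)
  show "x \<otimes>\<^bsub>DG D m\<^esub> y \<in> carrier (DG D m)" if "x \<in> carrier (DG D m)" "y \<in> carrier (DG D m)" for x y
    using mult_closed that by simp
  show "\<one>\<^bsub>DG D m\<^esub> \<in> carrier (DG D m)" using zero_in by simp
  show "x \<otimes>\<^bsub>DG D m\<^esub> y \<otimes>\<^bsub>DG D m\<^esub> z = x \<otimes>\<^bsub>DG D m\<^esub> (y \<otimes>\<^bsub>DG D m\<^esub> z)" for x y z
    by (simp add: fun_eq_iff mod_add_left_eq mod_add_right_eq add.assoc)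
  show "\<one>\<^bsub>DG D m\<^esub> \<otimes>\<^bsub>DG D m\<^esub> x = x" if "x \<in> carrier (DG D m)" for x
    using that by (auto simp: fun_eq_iff DE_def)
  show "\<exists>y\<in>carrier (DG D m). y \<otimes>\<^bsub>DG D m\<^esub> x = \<one>\<^bsub>DG D m\<^esub>" if "x \<in> carrier (DG D m)" for x
  proof
    show "(\<lambda>j i. (- x j i) mod m j) \<in> carrier (DG D m)" using neg_closed that by simp
    show "(\<lambda>j i. (- x j i) mod m j) \<otimes>\<^bsub>DG D m\<^esub> x = \<one>\<^bsub>DG D m\<^esub>"
      by (simp add: fun_eq_iff mod_add_left_eq)
  qed
qed

lemma subgroup_DEN: "subgroup (DEN D m N) (DG D m)"
proof -
  interpret G: group "DG D m" by (rule group_DG)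
  show ?thesis
  proof (rule G.subgroupI)
    show "DEN D m N \<subseteq> carrier (DG D m)" by (auto simp: DEN_def)
    show "DEN D m N \<noteq> {}" using zero_in by (auto simp: DEN_def)
    show "inv\<^bsub>DG D m\<^esub> a \<in> DEN D m N" if a: "a \<in> DEN D m N" for a
    proof -
      have aE: "a \<in> DE D m" using a by (simp add: DEN_def)
      have "inv\<^bsub>DG D m\<^esub> a = (\<lambda>j i. (- a j i) mod m j)"
        by (rule G.inv_equality) (use aE neg_closed in \<open>simp_all add: fun_eq_iff mod_add_left_eq\<close>)
      then show ?thesis using a neg_closed[OF aE] by (simp add: DEN_def)
    qed
    show "a \<otimes>\<^bsub>DG D m\<^esub> b \<in> DEN D m N" if "a \<in> DEN D m N" "b \<in> DEN D m N" for a b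
      using that mult_closed by (simp add: DEN_def)
  qed
qed

lemma finite_bound: "finite S \<Longrightarrow> S \<subseteq> DE D m \<Longrightarrow> \<exists>N. S \<subseteq> DEN D m N"
proof (induction S rule: finite_induct)
  case empty then show ?case by simp
next
  case (insert x S)
  then obtain N where N: "S \<subseteq> DEN D m N" by auto
  obtain N' where N': "\<forall>j\<ge>N'. \<forall>i. x j i = 0" using insert(4) by (auto simp: DE_def)
  have "insert x S \<subseteq> DEN D m (max N N')"
    using N N' insert(4) by (auto simp: DEN_def)
  then show ?case by blast
qed

lemma lf_DG: "locally_finite_group (DG D m)"
  unfolding locally_finite_group_def
proof (intro conjI allI impI group_DG)
  fix S assume S: "S \<subseteq> carrier (DG D m) \<and> finite S"
  then obtain N where "S \<subseteq> DEN D m N" using finite_bound[of S] by auto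
  then have "generate (DG D m) S \<subseteq> DEN D m N"
    using group.generate_subgroup_incl[OF group_DG _ subgroup_DEN] by blast
  then show "finite (generate (DG D m) S)" using finite_DEN finite_subset by blast
qed

lemma cyc_ne_imp: "cyc M a b \<noteq> 0 \<Longrightarrow> a \<noteq> b"
  by (auto simp: cyc_self)

lemma finite_dvals:
  assumes x: "x \<in> DE D m" and y: "y \<in> DE D m"
  shows "finite (dvals m x y)"
proof -
  obtain N1 where N1: "\<forall>j\<ge>N1. \<forall>i. x j i = 0" using x by (auto simp: DE_def)
  obtain N2 where N2: "\<forall>j\<ge>N2. \<forall>i. y j i = 0" using y by (auto simp: DE_def)
  let ?I = "Sigma {..<max N1 N2} (\<lambda>j. {..<D j})"
  have "dvals m x y \<subseteq> (\<lambda>(j,i). lam m j * cyc (m j) (x j i) (y j i)) ` ?I"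
  proof
    fix v assume "v \<in> dvals m x y"
    then obtain j i where v: "v = lam m j * cyc (m j) (x j i) (y j i)" "cyc (m j) (x j i) (y j i) \<noteq> 0"
      by (auto simp: dvals_def)
    have ne: "x j i \<noteq> y j i" using v(2) by (auto simp: cyc_self)
    have j: "j < max N1 N2"
    proof (rule ccontr)
      assume "\<not> j < max N1 N2"
      then have "x j i = 0" "y j i = 0" using N1 N2 by auto
      then show False using ne by simp
    qed
    have i: "i < D j"
    proof (rule ccontr)
      assume "\<not> i < D j"
      then have "x j i = 0" "y j i = 0" using DE_D[OF x] DE_D[OF y] by auto
      then show False using ne by simp
    qed
    show "v \<in> (\<lambda>(j,i). lam m j * cyc (m j) (x j i) (y j i)) ` ?I"
      using v(1) j i by (intro image_eqI[of _ _ "(j,i)"]) auto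
  qed
  moreover have "finite ?I" by auto
  ultimately show ?thesis by (meson finite_imageI finite_subset)
qed

lemma dd_ge:
  assumes x: "x \<in> DE D m" and y: "y \<in> DE D m"
  shows "real_of_int (lam m j * cyc (m j) (x j i) (y j i)) \<le> dd m x y"
proof (cases "cyc (m j) (x j i) (y j i) = 0")
  case True
  have "0 \<le> Max (insert 0 (dvals m x y))" using finite_dvals[OF x y] by (simp add: Max_ge_iff)
  then show ?thesis using True by (simp add: dd_def)
next
  case False
  then have "lam m j * cyc (m j) (x j i) (y j i) \<in> dvals m x y" by (auto simp: dvals_def)
  then have "lam m j * cyc (m j) (x j i) (y j i) \<le> Max (insert 0 (dvals m x y))"
    using finite_dvals[OF x y] by (simp add: Max_ge_iff)
  then show ?thesis unfolding dd_def by (simp only: of_int_le_iff)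
qed

lemma dd_nonneg: "x \<in> DE D m \<Longrightarrow> y \<in> DE D m \<Longrightarrow> 0 \<le> dd m x y"
  using finite_dvals[of x y] by (simp add: dd_def Max_ge_iff)

lemma dd_le:
  assumes x: "x \<in> DE D m" and y: "y \<in> DE D m" and B: "0 \<le> B"
    and H: "\<And>j i. cyc (m j) (x j i) (y j i) \<noteq> 0 \<Longrightarrow> real_of_int (lam m j * cyc (m j) (x j i) (y j i)) \<le> B"
  shows "dd m x y \<le> B"
proof -
  have "Max (insert 0 (dvals m x y)) \<in> insert 0 (dvals m x y)"
    using finite_dvals[OF x y] by (intro Max_in) auto
  then show ?thesis
  proof
    assume "Max (insert 0 (dvals m x y)) = 0"
    then show ?thesis using B by (simp add: dd_def)
  next
    assume "Max (insert 0 (dvals m x y)) \<in> dvals m x y"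
    then obtain j i where "Max (insert 0 (dvals m x y)) = lam m j * cyc (m j) (x j i) (y j i)"
      "cyc (m j) (x j i) (y j i) \<noteq> 0" unfolding dvals_def by blast
    then show ?thesis using H[of j i] by (simp add: dd_def)
  qed
qed

lemma cyc_pos_DE:
  assumes x: "x \<in> DE D m" and y: "y \<in> DE D m" and ne: "x j i \<noteq> y j i"
  shows "cyc (m j) (x j i) (y j i) \<ge> 1"
proof -
  have "cyc (m j) (x j i) (y j i) \<noteq> 0"
    using cyc_zero_iff[OF mpos, of "x j i" j "y j i"] DE_range[OF x, of j i] DE_range[OF y, of j i] ne by simp
  moreover have "cyc (m j) (x j i) (y j i) \<ge> 0" using cyc_nonneg[OF mpos] .
  ultimately show ?thesis by simp
qed

lemma dd_pos:
  assumes x: "x \<in> DE D m" and y: "y \<in> DE D m" and ne: "x j i \<noteq> y j i"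
  shows "real_of_int (lam m j) \<le> dd m x y"
proof -
  have "lam m j * 1 \<le> lam m j * cyc (m j) (x j i) (y j i)"
    using cyc_pos_DE[OF x y ne] lam_pos[of j] by (intro mult_left_mono) auto
  then have "lam m j \<le> lam m j * cyc (m j) (x j i) (y j i)" by simp
  then have "real_of_int (lam m j) \<le> real_of_int (lam m j * cyc (m j) (x j i) (y j i))" by (simp only: of_int_le_iff)
  then show ?thesis using dd_ge[OF x y] by (meson order_trans)
qed

lemma dd_sym: "dd m x y = dd m y x"
proof -
  have "dvals m x y = dvals m y x" by (auto simp: dvals_def cyc_sym)
  then show ?thesis by (simp add: dd_def)
qed

lemma dd_self: "dd m x x = 0"
  by (simp add: dd_def dvals_def cyc_self)

lemma metric_DE: "metric_on (DE D m) (dd m)"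
  unfolding metric_on_def
proof (intro conjI ballI)
  fix x y assume x: "x \<in> DE D m" and y: "y \<in> DE D m"
  show "0 \<le> dd m x y" using dd_nonneg[OF x y] .
  show "dd m x y = dd m y x" by (rule dd_sym)
  show "(dd m x y = 0) = (x = y)"
  proof
    assume z: "dd m x y = 0"
    show "x = y"
    proof (rule ccontr)
      assume "x \<noteq> y"
      then obtain j i where "x j i \<noteq> y j i" by (meson ext)
      then have "real_of_int (lam m j) \<le> 0" using dd_pos[OF x y] z by simp
      then show False using lam_pos[of j] by simp
    qed
  qed (simp add: dd_self)
next
  fix x y z assume x: "x \<in> DE D m" and y: "y \<in> DE D m" and z: "z \<in> DE D m"
  show "dd m x z \<le> dd m x y + dd m y z"
  proof (rule dd_le[OF x z])
    show "0 \<le> dd m x y + dd m y z" using dd_nonneg[OF x y] dd_nonneg[OF y z] by simp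
    fix j i
    have "lam m j * cyc (m j) (x j i) (z j i) \<le> lam m j * (cyc (m j) (x j i) (y j i) + cyc (m j) (y j i) (z j i))"
      using cyc_triangle[OF mpos] lam_pos[of j] by (intro mult_left_mono) auto
    then have "lam m j * cyc (m j) (x j i) (z j i) \<le>
        lam m j * cyc (m j) (x j i) (y j i) + lam m j * cyc (m j) (y j i) (z j i)"
      by (simp add: algebra_simps)
    then have "real_of_int (lam m j * cyc (m j) (x j i) (z j i)) \<le>
        real_of_int (lam m j * cyc (m j) (x j i) (y j i) + lam m j * cyc (m j) (y j i) (z j i))"
      by (simp only: of_int_le_iff)
    then have "real_of_int (lam m j * cyc (m j) (x j i) (z j i)) \<le>
        real_of_int (lam m j * cyc (m j) (x j i) (y j i)) + real_of_int (lam m j * cyc (m j) (y j i) (z j i))"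
      by (simp only: of_int_add)
    also have "\<dots> \<le> dd m x y + dd m y z" using dd_ge[OF x y] dd_ge[OF y z] by (intro add_mono)
    finally show "real_of_int (lam m j * cyc (m j) (x j i) (z j i)) \<le> dd m x y + dd m y z" .
  qed
qed

lemma dd_invariant: "dd m (\<lambda>j i. (g j i + h j i) mod m j) (\<lambda>j i. (g j i + k j i) mod m j) = dd m h k"
  by (simp add: dd_def dvals_def cyc_shift)

lemma proper_DE:
  assumes x: "x \<in> DE D m"
  shows "finite {y\<in>DE D m. dd m x y \<le> r}"
proof -
  obtain N0 where N0: "\<forall>j\<ge>N0. \<forall>i. x j i = 0" using x by (auto simp: DE_def)
  obtain N1 where N1: "real_of_int (lam m N1) > r" using lam_unbounded by blast
  have "{y\<in>DE D m. dd m x y \<le> r} \<subseteq> DEN D m (max N0 N1)"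
  proof
    fix y assume "y \<in> {y\<in>DE D m. dd m x y \<le> r}"
    then have y: "y \<in> DE D m" "dd m x y \<le> r" by auto
    have "y j i = 0" if j: "j \<ge> max N0 N1" for j i
    proof (rule ccontr)
      assume ne0: "y j i \<noteq> 0"
      then have "x j i \<noteq> y j i" using N0 j by simp
      then have "real_of_int (lam m j) \<le> dd m x y" by (rule dd_pos[OF x y(1)])
      moreover have "lam m N1 \<le> lam m j" using j by (intro lam_mono) simp
      ultimately show False using N1 y(2) by linarith
    qed
    then show "y \<in> DEN D m (max N0 N1)" using y by (simp add: DEN_def)
  qed
  then show ?thesis using finite_DEN finite_subset by blast
qed

lemma plm_DG: "proper_left_invariant_metric (DG D m) (dd m)"
  unfolding proper_left_invariant_metric_def
  using metric_DE dd_invariant proper_DE by simp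

lemma dd_agree:
  assumes x: "x \<in> DE D m" and y: "y \<in> DE D m" and d: "dd m x y < lam m (Suc j)" and j: "j < j'"
  shows "x j' i = y j' i"
proof (rule ccontr)
  assume "x j' i \<noteq> y j' i"
  then have "real_of_int (lam m j') \<le> dd m x y" by (rule dd_pos[OF x y])
  moreover have "lam m (Suc j) \<le> lam m j'" using j by (intro lam_mono) simp
  ultimately show False using d by linarith
qed

lemma dd_upper:
  assumes x: "x \<in> DE D m" and y: "y \<in> DE D m"
    and above: "\<And>j' i. j < j' \<Longrightarrow> x j' i = y j' i"
    and lev: "\<And>i. real_of_int (lam m j * cyc (m j) (x j i) (y j i)) \<le> B"
    and lB: "real_of_int (lam m j) \<le> B"
  shows "dd m x y \<le> B"
proof (rule dd_le[OF x y])
  show "0 \<le> B" using lB lam_pos[of j] by linarith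
  fix j' i assume c: "cyc (m j') (x j' i) (y j' i) \<noteq> 0"
  show "real_of_int (lam m j' * cyc (m j') (x j' i) (y j' i)) \<le> B"
  proof (cases "j' < j")
    case True
    have c1: "cyc (m j') (x j' i) (y j' i) \<le> m j'" using cyc_less[OF mpos, of j'] by (simp add: less_imp_le)
    have a1: "lam m j' * cyc (m j') (x j' i) (y j' i) \<le> lam m j' * m j'"
      using c1 lam_pos[of j'] by (intro mult_left_mono) auto
    have a2: "lam m (Suc j') \<le> lam m j" using True by (intro lam_mono) simp
    have "lam m j' * cyc (m j') (x j' i) (y j' i) \<le> lam m j" using a1 a2 by (simp add: lam_Suc)
    then have "real_of_int (lam m j' * cyc (m j') (x j' i) (y j' i)) \<le> real_of_int (lam m j)"
      by (simp only: of_int_le_iff)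
    then show ?thesis using lB by linarith
  next
    case False
    show ?thesis
    proof (cases "j' = j")
      case True then show ?thesis using lev by simp
    next
      case False
      then have "x j' i = y j' i" using above \<open>\<not> j' < j\<close> by simp
      then show ?thesis using c by (simp add: cyc_self)
    qed
  qed
qed

end

context digits begin

lemma lower_bound:
  assumes big: "\<And>M. \<exists>j. Suc n' \<le> D j \<and> M \<le> m j"
  shows "\<not> asdim_AN_le (DE D m) (dd m) n'"
proof
  assume "asdim_AN_le (DE D m) (dd m) n'"
  then obtain C k where C: "C > 0" and H: "\<And>s. s > 0 \<Longrightarrow> \<exists>U :: nat \<Rightarrow> _ set. (\<Union>i\<le>n'. U i) = DE D m \<and>
      (\<forall>i\<le>n'. \<forall>x y. scale_connected (dd m) s (U i) x y \<longrightarrow> dd m x y \<le> C * s + k)"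
    unfolding asdim_AN_le_def by blast
  define N where "N = Suc n'"
  obtain p :: nat where p: "real p > 2 * C + \<bar>k\<bar> + 2" using reals_Archimedean2 by blast
  have p0: "0 < p" using p C by (cases p) auto
  obtain j where j: "N \<le> D j" "int (2 * p) \<le> m j" using big[of "int (2 * p)"] N_def by blast
  define s where "s = 2 * real_of_int (lam m j)"
  have lam1: "real_of_int (lam m j) \<ge> 1" using lam_pos[of j] by simp
  have s0: "s > 0" using lam1 by (simp add: s_def)
  obtain U :: "nat \<Rightarrow> _ set" where U0: "(\<Union>i\<le>n'. U i) = DE D m \<and>
      (\<forall>i\<le>n'. \<forall>x y. scale_connected (dd m) s (U i) x y \<longrightarrow> dd m x y \<le> C * s + k)"
    using H[OF s0] by (rule exE)
  have U: "(\<Union>i\<le>n'. U i) = DE D m"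
    "\<And>i x y. i \<le> n' \<Longrightarrow> scale_connected (dd m) s (U i) x y \<Longrightarrow> dd m x y \<le> C * s + k"
    using U0 by auto
  define pt where "pt g = (\<lambda>j' i. if j' = j \<and> i < N then int (g i) else 0)" for g :: "nat \<Rightarrow> nat"
  have ptDE: "pt g \<in> DE D m" if g: "\<forall>i. g i \<le> p" for g
    unfolding DE_def mem_Collect_eq
  proof (intro conjI allI impI)
    fix j' i
    show "0 \<le> pt g j' i" by (simp add: pt_def)
    show "pt g j' i < m j'"
    proof (cases "j' = j \<and> i < N")
      case True
      then have "int (g i) \<le> int p" using g by simp
      then show ?thesis using True j(2) p0 by (simp add: pt_def)
    next
      case False
      then have "pt g j' i = 0" unfolding pt_def by auto
      then show ?thesis using mpos[of j'] by simp
    qed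
    show "D j' \<le> i \<Longrightarrow> pt g j' i = 0" using j(1) by (auto simp: pt_def)
  next
    show "\<exists>N'. \<forall>j'\<ge>N'. \<forall>i. pt g j' i = 0" by (intro exI[of _ "Suc j"]) (simp add: pt_def)
  qed
  define col where "col g = (LEAST c. pt g \<in> U c)" for g
  have colU: "pt g \<in> U (col g) \<and> col g < N" if g: "\<forall>i. g i \<le> p" for g
  proof -
    have "pt g \<in> (\<Union>i\<le>n'. U i)" using ptDE[OF g] U(1) by simp
    then obtain c where c: "c \<le> n'" "pt g \<in> U c" by blast
    have "pt g \<in> U (col g)" unfolding col_def by (rule LeastI[of _ c]) (rule c(2))
    moreover have "col g \<le> c" unfolding col_def by (rule Least_le) (rule c(2))
    ultimately show ?thesis using c(1) N_def by simp
  qed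
  have adj: "dd m (pt a) (pt b) \<le> real_of_int (lam m j)"
    if a: "\<forall>i. a i \<le> p" and b: "\<forall>i. b i \<le> p" and ab: "gadj a b" for a b
  proof (rule dd_upper[OF ptDE[OF a] ptDE[OF b]])
    show "pt a j' i = pt b j' i" if "j < j'" for j' i using that by (simp add: pt_def)
    show "real_of_int (lam m j) \<le> real_of_int (lam m j)" by simp
    fix i
    have "cyc (m j) (pt a j i) (pt b j i) \<le> 1"
    proof (cases "i < N")
      case True
      have "\<bar>int (a i) - int (b i)\<bar> \<le> 1" using ab unfolding gadj_def by (metis abs_le_iff diff_le_eq le_diff_eq of_nat_Suc of_nat_le_iff add.commute minus_diff_eq)
      then show ?thesis using True cyc_le_iff[OF mpos[of j], where a = "int (a i)" and b = "int (b i)" and t = 1] by (auto simp: pt_def)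
    next
      case False then show ?thesis by (simp add: pt_def cyc_self)
    qed
    then have "lam m j * cyc (m j) (pt a j i) (pt b j i) \<le> lam m j * 1"
      using lam_pos[of j] by (intro mult_left_mono) auto
    then show "real_of_int (lam m j * cyc (m j) (pt a j i) (pt b j i)) \<le> real_of_int (lam m j)"
      by (simp only: of_int_le_iff mult_1_right)
  qed
  obtain c x y where c: "c < N" and x: "\<forall>i. x i \<le> p" and y: "\<forall>i. y i \<le> p" and cx: "col x = c"
    and x0: "x c = 0" and yc: "p \<le> Suc (y c)"
    and Q: "(\<lambda>a b. (\<forall>i. a i \<le> p) \<and> (\<forall>i. b i \<le> p) \<and> col a = c \<and> col b = c \<and> gadj a b)\<^sup>*\<^sup>* y x"
    using hex[OF p0, of col N] colU by blast
  have ch: "(\<lambda>a b. a \<in> U c \<and> b \<in> U c \<and> dd m a b < s)\<^sup>*\<^sup>* (pt y) (pt x)"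
    using Q
  proof (induction rule: rtranclp_induct)
    case base then show ?case by simp
  next
    case (step a b)
    then have ab: "\<forall>i. a i \<le> p" "\<forall>i. b i \<le> p" "col a = c" "col b = c" "gadj a b" by auto
    have "pt a \<in> U c" using colU[OF ab(1)] ab(3) by simp
    moreover have "pt b \<in> U c" using colU[OF ab(2)] ab(4) by simp
    moreover have "dd m (pt a) (pt b) \<le> real_of_int (lam m j)" using adj[OF ab(1,2,5)] .
    moreover have "real_of_int (lam m j) < s" using lam1 by (simp add: s_def)
    ultimately show ?case using step by (auto intro: rtranclp.rtrancl_into_rtrancl)
  qed
  have yU: "pt y \<in> U c"
    using Q
  proof (cases rule: converse_rtranclpE)
    case base then show ?thesis using colU[OF x] cx by simp
  next
    case (step w) then show ?thesis using colU[OF y] by simp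
  qed
  have "scale_connected (dd m) s (U c) (pt y) (pt x)" using yU ch by (simp add: scale_connected_def)
  moreover have "c \<le> n'" using c N_def by simp
  ultimately have up: "dd m (pt y) (pt x) \<le> C * s + k" using U(2) by blast
  have "y c \<le> p" using y by simp
  then have "2 * int (y c) \<le> int (2 * p)" by simp
  then have "2 * int (y c) \<le> m j" using j(2) by linarith
  then have "cyc (m j) 0 (int (y c)) \<ge> int (y c)" by (intro cyc_ge[OF mpos]) auto
  then have cy: "cyc (m j) (pt y j c) (pt x j c) \<ge> int p - 1"
    using c x0 yc by (simp add: pt_def cyc_sym)
  have "lam m j * (int p - 1) \<le> lam m j * cyc (m j) (pt y j c) (pt x j c)"
    using cy lam_pos[of j] by (intro mult_left_mono) auto
  then have "real_of_int (lam m j * (int p - 1)) \<le> real_of_int (lam m j * cyc (m j) (pt y j c) (pt x j c))"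
    by (simp only: of_int_le_iff)
  moreover have "real_of_int (lam m j * (int p - 1)) = real_of_int (lam m j) * (real p - 1)" by simp
  ultimately have "real_of_int (lam m j) * (real p - 1) \<le> real_of_int (lam m j * cyc (m j) (pt y j c) (pt x j c))"
    by simp
  also have "\<dots> \<le> dd m (pt y) (pt x)" by (rule dd_ge[OF ptDE[OF y] ptDE[OF x]])
  finally have low: "real_of_int (lam m j) * (real p - 1) \<le> C * s + k" using up by linarith
  have "real_of_int (lam m j) * (2 * C + \<bar>k\<bar>) < real_of_int (lam m j) * (real p - 1)"
    using p lam1 by (intro mult_strict_left_mono) auto
  moreover have "\<bar>k\<bar> \<le> real_of_int (lam m j) * \<bar>k\<bar>" using lam1 by (simp add: mult_le_cancel_right1)
  ultimately have "C * s + k < real_of_int (lam m j) * (real p - 1)"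
    by (simp add: s_def algebra_simps)
  then show False using low by linarith
qed

end

definition goodp :: "nat \<Rightarrow> int \<Rightarrow> nat \<Rightarrow> int \<Rightarrow> bool" where
  "goodp n r i u \<longleftrightarrow> r \<le> (u - int i * (2 * r)) mod (int (Suc n) * (2 * r)) \<and>
      (u - int i * (2 * r)) mod (int (Suc n) * (2 * r)) \<le> int (Suc n) * (2 * r) - r"

lemma bad_card:
  assumes r: "r > 0"
  shows "card {i\<in>{..n}. \<not> goodp n r i u} \<le> 1"
proof -
  have L: "int (Suc n) * (2 * r) > 0" using r by simp
  have "\<forall>i1\<in>{i\<in>{..n}. \<not> goodp n r i u}. \<forall>i2\<in>{i\<in>{..n}. \<not> goodp n r i u}. i1 = i2"
  proof (intro ballI)
    fix i1 i2 assume i1: "i1 \<in> {i\<in>{..n}. \<not> goodp n r i u}" and i2: "i2 \<in> {i\<in>{..n}. \<not> goodp n r i u}"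
    obtain q1 where q1: "\<bar>u - int i1 * (2 * r) - q1 * (int (Suc n) * (2 * r))\<bar> < r"
      using bad_near[OF L, of r "u - int i1 * (2 * r)"] i1 unfolding goodp_def by auto
    obtain q2 where q2: "\<bar>u - int i2 * (2 * r) - q2 * (int (Suc n) * (2 * r))\<bar> < r"
      using bad_near[OF L, of r "u - int i2 * (2 * r)"] i2 unfolding goodp_def by auto
    show "i1 = i2" using bad_unique[OF r _ _ q1 q2] i1 i2 by simp
  qed
  then show ?thesis by (simp add: card_le_Suc0_iff_eq)
qed

lemma pigeon:
  assumes r: "r > 0"
  shows "\<exists>i\<le>n. \<forall>c<n. goodp n r i (v c)"
proof -
  let ?B = "\<Union>c<n. {i\<in>{..n}. \<not> goodp n r i (v c)}"
  have "card ?B \<le> (\<Sum>c<n. card {i\<in>{..n}. \<not> goodp n r i (v c)})" by (rule card_UN_le) simp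
  also have "\<dots> \<le> (\<Sum>c<n. 1)" using bad_card[OF r] by (intro sum_mono) auto
  finally have "card ?B \<le> n" by simp
  moreover have fB: "finite ?B" by auto
  ultimately have "\<not> {..n} \<subseteq> ?B"
  proof -
    assume cB: "card ?B \<le> n" and fB: "finite ?B"
    show "\<not> {..n} \<subseteq> ?B"
    proof
      assume "{..n} \<subseteq> ?B"
      then have "card {..n} \<le> card ?B" using fB by (rule card_mono[rotated])
      then show False using cB by simp
    qed
  qed
  then obtain i where "i \<in> {..n}" "i \<notin> ?B" by blast
  then show ?thesis by (intro exI[of _ i]) auto
qed

context digits begin

lemma level_exists:
  assumes s: "s > 1"
  shows "\<exists>j. real_of_int (lam m j) < s \<and> s \<le> real_of_int (lam m (Suc j))"
proof -
  obtain N where N: "real_of_int (lam m N) > s" using lam_unbounded by blast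
  define j0 where "j0 = (LEAST j. s \<le> real_of_int (lam m j))"
  have a: "s \<le> real_of_int (lam m j0)" unfolding j0_def by (rule LeastI[of _ N]) (use N in simp)
  have j0: "j0 \<noteq> 0"
  proof
    assume "j0 = 0" then show False using a s by simp
  qed
  have "\<not> s \<le> real_of_int (lam m (j0 - 1))" unfolding j0_def by (rule not_less_Least) (use j0 j0_def in simp)
  then show ?thesis using a j0 by (intro exI[of _ "j0 - 1"]) simp
qed

lemma chain_prop:
  assumes "R\<^sup>*\<^sup>* x y" "P x" "\<And>a b. R a b \<Longrightarrow> P a \<Longrightarrow> P b"
  shows "P y"
  using assms by (induction rule: rtranclp_induct) auto

lemma upper_bound:
  assumes Dn: "\<And>j. D j = n" and mdef: "\<And>j. m j = int (Suc n) * 2 ^ Suc j"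
  shows "asdim_AN_le (DE D m) (dd m) n"
proof -
  define C where "C = 4 * real (Suc n)"
  have C0: "C > 0" by (simp add: C_def)
  have main: "\<exists>U :: nat \<Rightarrow> _ set. (\<Union>i\<le>n. U i) = DE D m \<and>
      (\<forall>i\<le>n. \<forall>x y. scale_connected (dd m) s (U i) x y \<longrightarrow> dd m x y \<le> C * s + 0)" if s0: "s > 0" for s
  proof (cases "s \<le> 1")
    case True
    show ?thesis
    proof (intro exI[of _ "\<lambda>i. DE D m"] conjI allI impI)
      show "(\<Union>i\<le>n. DE D m) = DE D m" by auto
      fix i x y assume sc: "scale_connected (dd m) s (DE D m) x y"
      have "y = x"
      proof (rule chain_prop[where P = "\<lambda>z. z = x"])
        show "(\<lambda>a b. a \<in> DE D m \<and> b \<in> DE D m \<and> dd m a b < s)\<^sup>*\<^sup>* x y" using sc by (simp add: scale_connected_def)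
        fix a b assume ab: "a \<in> DE D m \<and> b \<in> DE D m \<and> dd m a b < s" and "a = x"
        have "a = b"
        proof (rule ccontr)
          assume "a \<noteq> b"
          then obtain j i where "a j i \<noteq> b j i" by (meson ext)
          then have "real_of_int (lam m j) \<le> dd m a b" using dd_pos ab by blast
          then show False using lam_pos[of j] ab True by linarith
        qed
        then show "b = x" using \<open>a = x\<close> by simp
      qed simp
      then show "dd m x y \<le> C * s + 0" using C0 s0 by (simp add: dd_self)
    qed
  next
    case False
    then have s1: "s > 1" by simp
    obtain j where j: "real_of_int (lam m j) < s" "s \<le> real_of_int (lam m (Suc j))"
      using level_exists[OF s1] by blast
    define l where "l = real_of_int (lam m j)"
    have l1: "l \<ge> 1" using lam_pos[of j] by (simp add: l_def)
    define t where "t = s / l"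
    have t1: "t > 1" using j l1 by (simp add: t_def l_def)
    have st: "s = t * l" using l1 by (simp add: t_def)
    obtain ea :: nat where ea: "0 < ea" "t \<le> 2 ^ ea" "2 ^ ea < 2 * t" using pow2_between[OF t1] by blast
    have agree: "\<forall>j'>j. \<forall>\<iota>. y j' \<iota> = x j' \<iota>"
      if "(\<lambda>a b. a \<in> V \<and> b \<in> V \<and> dd m a b < s)\<^sup>*\<^sup>* x y" "V \<subseteq> DE D m" "x \<in> V" for V x y
    proof -
      have "y \<in> V \<and> (\<forall>j'>j. \<forall>\<iota>. y j' \<iota> = x j' \<iota>)"
      proof (rule chain_prop[OF that(1)])
        show "x \<in> V \<and> (\<forall>j'>j. \<forall>\<iota>. x j' \<iota> = x j' \<iota>)" using that(3) by simp
        fix a b assume ab: "a \<in> V \<and> b \<in> V \<and> dd m a b < s" and P: "a \<in> V \<and> (\<forall>j'>j. \<forall>\<iota>. a j' \<iota> = x j' \<iota>)"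
        have "dd m a b < real_of_int (lam m (Suc j))" using ab j(2) by linarith
        then have "\<forall>j'>j. \<forall>\<iota>. a j' \<iota> = b j' \<iota>" using dd_agree ab that(2) by blast
        then show "b \<in> V \<and> (\<forall>j'>j. \<forall>\<iota>. b j' \<iota> = x j' \<iota>)" using P ab by simp
      qed
      then show ?thesis by simp
    qed
    show ?thesis
    proof (cases "j < ea")
      case True
      show ?thesis
      proof (intro exI[of _ "\<lambda>i. DE D m"] conjI allI impI)
        show "(\<Union>i\<le>n. DE D m) = DE D m" by auto
        fix i x y assume sc: "scale_connected (dd m) s (DE D m) x y"
        have x: "x \<in> DE D m" using sc by (simp add: scale_connected_def)
        have ch: "(\<lambda>a b. a \<in> DE D m \<and> b \<in> DE D m \<and> dd m a b < s)\<^sup>*\<^sup>* x y"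
          using sc by (simp add: scale_connected_def)
        have y: "y \<in> DE D m"
          by (rule chain_prop[OF ch, where P = "\<lambda>z. z \<in> DE D m"]) (use x in auto)
        have ag: "\<forall>j'>j. \<forall>\<iota>. y j' \<iota> = x j' \<iota>" using agree[OF ch _ x] by simp
        have mj: "real_of_int (m j) \<le> real (Suc n) * 2 ^ ea"
        proof -
          have "(2::int) ^ Suc j \<le> 2 ^ ea" using True by (intro power_increasing) auto
          then have "m j \<le> int (Suc n) * 2 ^ ea" using mdef[of j] by (simp add: mult_left_mono del: of_nat_Suc)
          then have "real_of_int (m j) \<le> real_of_int (int (Suc n) * 2 ^ ea)" by (simp only: of_int_le_iff)
          then show ?thesis by simp
        qed
        have "dd m x y \<le> l * real_of_int (m j)"
        proof (rule dd_upper[OF x y])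
          show "x j' \<iota> = y j' \<iota>" if "j < j'" for j' \<iota> using ag that by simp
          fix \<iota>
          have "lam m j * cyc (m j) (x j \<iota>) (y j \<iota>) \<le> lam m j * m j"
            using cyc_less[OF mpos, of j] lam_pos[of j] by (intro mult_left_mono) (auto simp: less_imp_le)
          then show "real_of_int (lam m j * cyc (m j) (x j \<iota>) (y j \<iota>)) \<le> l * real_of_int (m j)"
            unfolding l_def of_int_mult[symmetric] by (simp only: of_int_le_iff)
          have "l * 1 \<le> l * real_of_int (m j)" using l1 m2[of j] by (intro mult_left_mono) auto
          then show "real_of_int (lam m j) \<le> l * real_of_int (m j)" by (simp add: l_def)
        qed
        also have "\<dots> \<le> l * (real (Suc n) * 2 ^ ea)" using mj l1 by (intro mult_left_mono) auto
        also have "\<dots> \<le> l * (real (Suc n) * (2 * t))" using ea(3) l1 by (intro mult_left_mono) auto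
        also have "\<dots> \<le> C * s + 0"
        proof -
          have pos: "0 \<le> real (Suc n) * t * l" using l1 t1 by simp
          have "l * (real (Suc n) * (2 * t)) = 2 * (real (Suc n) * t * l)" by (simp add: algebra_simps)
          moreover have "C * s + 0 = 4 * (real (Suc n) * t * l)" by (simp add: C_def st algebra_simps)
          ultimately show ?thesis using pos by linarith
        qed
        finally show "dd m x y \<le> C * s + 0" .
      qed
    next
      case False
      then have aj: "ea \<le> j" by simp
      define r :: int where "r = 2 ^ ea"
      have r0: "r > 0" by (simp add: r_def)
      define L where "L = int (Suc n) * (2 * r)"
      have L0: "L > 0" using r0 by (simp add: L_def)
      have LM: "L dvd m j"
      proof -
        have "(2::int) ^ Suc ea dvd 2 ^ Suc j" using aj by (intro le_imp_power_dvd) simp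
        then have "(2::int) * 2 ^ ea dvd 2 ^ Suc j" by simp
        then show ?thesis by (simp add: L_def r_def mdef)
      qed
      define idx where "idx x = (LEAST i. \<forall>c<n. goodp n r i (x j c))" for x :: "nat \<Rightarrow> nat \<Rightarrow> int"
      have idx: "idx x \<le> n \<and> (\<forall>c<n. goodp n r (idx x) (x j c))" for x
      proof -
        obtain i where i: "i \<le> n" "\<forall>c<n. goodp n r i (x j c)" using pigeon[OF r0, of n "x j"] by blast
        have "\<forall>c<n. goodp n r (idx x) (x j c)" unfolding idx_def by (rule LeastI[of _ i]) (rule i(2))
        moreover have "idx x \<le> i" unfolding idx_def by (rule Least_le) (rule i(2))
        ultimately show ?thesis using i(1) by simp
      qed
      define U where "U i = {x\<in>DE D m. idx x = i}" for i
      show ?thesis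
      proof (intro exI[of _ U] conjI allI impI)
        show "(\<Union>i\<le>n. U i) = DE D m"
        proof
          show "(\<Union>i\<le>n. U i) \<subseteq> DE D m" by (auto simp: U_def)
          show "DE D m \<subseteq> (\<Union>i\<le>n. U i)"
          proof
            fix x assume "x \<in> DE D m" then show "x \<in> (\<Union>i\<le>n. U i)" using idx[of x] by (auto simp: U_def)
          qed
        qed
        fix i x y assume i: "i \<le> n" and sc: "scale_connected (dd m) s (U i) x y"
        have x: "x \<in> U i" and ch: "(\<lambda>a b. a \<in> U i \<and> b \<in> U i \<and> dd m a b < s)\<^sup>*\<^sup>* x y"
          using sc by (auto simp: scale_connected_def)
        have UD: "U i \<subseteq> DE D m" by (auto simp: U_def)
        have xD: "x \<in> DE D m" using x UD by blast
        define w where "w v = wpos (m j) L (int i * (2 * r)) v" for v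
        have wy: "y \<in> U i \<and> (\<forall>c<n. w (y j c) = w (x j c))"
        proof (rule chain_prop[OF ch])
          show "x \<in> U i \<and> (\<forall>c<n. w (x j c) = w (x j c))" using x by simp
          fix a b assume ab: "a \<in> U i \<and> b \<in> U i \<and> dd m a b < s" and P: "a \<in> U i \<and> (\<forall>c<n. w (a j c) = w (x j c))"
          have aD: "a \<in> DE D m" and bD: "b \<in> DE D m" using ab UD by auto
          have ga: "\<forall>c<n. goodp n r i (a j c)" using idx[of a] ab by (auto simp: U_def)
          have "w (a j c) = w (b j c)" if c: "c < n" for c
          proof -
            have "real_of_int (lam m j * cyc (m j) (a j c) (b j c)) \<le> dd m a b" by (rule dd_ge[OF aD bD])
            then have "l * real_of_int (cyc (m j) (a j c) (b j c)) < t * l" using ab st by (simp add: l_def)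
            then have "real_of_int (cyc (m j) (a j c) (b j c)) < t" using l1 by (simp add: mult.commute)
            moreover have "real_of_int r = 2 ^ ea" by (simp add: r_def)
            ultimately have "real_of_int (cyc (m j) (a j c) (b j c)) < real_of_int r" using ea(2) by linarith
            then have "cyc (m j) (a j c) (b j c) < r" by (simp only: of_int_less_iff)
            then have cy: "cyc (m j) (b j c) (a j c) < r" by (simp add: cyc_sym)
            show ?thesis unfolding w_def
              by (rule wpos_step[OF mpos L0 LM _ cy]) (use ga c in \<open>simp add: goodp_def L_def\<close>)
          qed
          then show "b \<in> U i \<and> (\<forall>c<n. w (b j c) = w (x j c))" using P ab by simp
        qed
        have yD: "y \<in> DE D m" using wy UD by blast
        have ag: "\<forall>j'>j. \<forall>\<iota>. y j' \<iota> = x j' \<iota>" using agree[OF ch UD x] by simp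
        have "dd m x y \<le> l * real_of_int L"
        proof (rule dd_upper[OF xD yD])
          show "x j' \<iota> = y j' \<iota>" if "j < j'" for j' \<iota> using ag that by simp
          fix \<iota>
          have "cyc (m j) (x j \<iota>) (y j \<iota>) \<le> L"
          proof (cases "\<iota> < n")
            case True
            have "wpos (m j) L (int i * (2 * r)) (x j \<iota>) = wpos (m j) L (int i * (2 * r)) (y j \<iota>)"
              using wy True by (simp add: w_def)
            then show ?thesis by (rule wpos_end[OF mpos L0])
          next
            case False
            then have "x j \<iota> = 0" "y j \<iota> = 0" using DE_D[OF xD] DE_D[OF yD] Dn by auto
            then show ?thesis using L0 by (simp add: cyc_self)
          qed
          then have "lam m j * cyc (m j) (x j \<iota>) (y j \<iota>) \<le> lam m j * L"
            using lam_pos[of j] by (intro mult_left_mono) auto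
          then show "real_of_int (lam m j * cyc (m j) (x j \<iota>) (y j \<iota>)) \<le> l * real_of_int L"
            unfolding l_def of_int_mult[symmetric] by (simp only: of_int_le_iff)
          have "l * 1 \<le> l * real_of_int L" using l1 L0 by (intro mult_left_mono) auto
          then show "real_of_int (lam m j) \<le> l * real_of_int L" by (simp add: l_def)
        qed
        also have "l * real_of_int L = l * (real (Suc n) * (2 * 2 ^ ea))" by (simp add: L_def r_def)
        also have "\<dots> \<le> l * (real (Suc n) * (2 * (2 * t)))" using ea(3) l1 by (intro mult_left_mono) auto
        also have "\<dots> = C * s + 0" by (simp add: C_def st algebra_simps)
        finally show "dd m x y \<le> C * s + 0" .
      qed
    qed
  qed
  show ?thesis unfolding asdim_AN_le_def using C0 main by blast
qed

end

lemma pow_big: "M \<le> int c * 2 ^ Suc (nat M)" if "c \<ge> 1" for M :: int and c :: nat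
proof -
  have "nat M < 2 ^ Suc (nat M)" using less_exp[of "Suc (nat M)"] by simp
  then have "int (nat M) < 2 ^ Suc (nat M)" by (metis of_nat_less_iff of_nat_numeral of_nat_power)
  moreover have "(2::int) ^ Suc (nat M) \<le> int c * 2 ^ Suc (nat M)" using that by simp
  ultimately show ?thesis by linarith
qed

theorem theorem4p10:
  fixes n :: enat
  assumes "n \<ge> 1"
  shows "\<exists>(G :: nat monoid) (d :: nat \<Rightarrow> nat \<Rightarrow> real).
           locally_finite_group G \<and> proper_left_invariant_metric G d \<and>
           asdim_AN (carrier G) d = n"
proof (cases n)
  case (enat k)
  define D where "D = (\<lambda>j::nat. k)"
  define m where "m = (\<lambda>j::nat. int (Suc k) * 2 ^ Suc j)"
  interpret digits D m
  proof
    fix j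
    have "(2::int) ^ 1 \<le> 2 ^ Suc j" by (rule power_increasing) simp_all
    then have "(2::int) \<le> 2 ^ Suc j" by simp
    also have "\<dots> \<le> int (Suc k) * 2 ^ Suc j" by simp
    finally show "2 \<le> m j" by (simp add: m_def)
  qed
  have up: "asdim_AN_le (DE D m) (dd m) k" by (rule upper_bound) (simp_all add: D_def m_def)
  have low: "\<not> asdim_AN_le (DE D m) (dd m) k'" if "k' < k" for k'
  proof (rule lower_bound)
    fix M
    show "\<exists>j. Suc k' \<le> D j \<and> M \<le> m j"
      using that pow_big[of "Suc k" M] by (intro exI[of _ "nat M"]) (simp add: D_def m_def)
  qed
  have "(LEAST k'. asdim_AN_le (DE D m) (dd m) k') = k"
    by (rule Least_equality[where P = "asdim_AN_le (DE D m) (dd m)", OF up]) (meson low not_le)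
  then have "asdim_AN (DE D m) (dd m) = n" using up enat by (auto simp: asdim_AN_def)
  then show ?thesis
    using transport[OF lf_DG plm_DG] countable_DE by simp
next
  case infinity
  define D where "D = (\<lambda>j::nat. j)"
  define m where "m = (\<lambda>j::nat. (2::int) ^ Suc j)"
  interpret digits D m
  proof
    fix j
    have "(2::int) ^ 1 \<le> 2 ^ Suc j" by (rule power_increasing) simp_all
    then show "2 \<le> m j" unfolding m_def by simp
  qed
  have low: "\<not> asdim_AN_le (DE D m) (dd m) k'" for k'
  proof (rule lower_bound)
    fix M
    have "M \<le> int 1 * 2 ^ Suc (nat M)" by (rule pow_big) simp
    moreover have "(2::int) ^ Suc (nat M) \<le> 2 ^ Suc (max (Suc k') (nat M))"
      by (intro power_increasing) auto
    ultimately have "M \<le> 2 ^ Suc (max (Suc k') (nat M))" by (simp only: mult_1 of_nat_1)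
    then show "\<exists>j. Suc k' \<le> D j \<and> M \<le> m j"
      by (intro exI[of _ "max (Suc k') (nat M)"]) (simp add: D_def m_def)
  qed
  then have "asdim_AN (DE D m) (dd m) = n" using infinity by (auto simp: asdim_AN_def)
  then show ?thesis
    using transport[OF lf_DG plm_DG] countable_DE by simp
qed

end
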